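(* Let $(\gamma_n)$ be a sequence of positive reals satisfying conditions (C1)–(C7) below, let $\omega>0$ be fixed, and let $a_n,b_n$ be defined as below. Then $\operatorname{Im}(a_n)>|b_n|$ for all sufficiently large $n$.
   Context: Let $\Delta_n=\gamma_{n+1}-\gamma_n$, $\Delta^2_n=\Delta_{n+1}-\Delta_n$. Conditions: (C1) $\gamma_n\to\infty$; (C2) $\Delta_n\to0$; (C3) there exist $n_0,m_0$ with $\gamma_{n+m}>\gamma_n$ for all $n\ge n_0$, $m\ge m_0$; (C4) $\sum 1/\gamma_j=\infty$; (C5) some $\kappa>1$ has $\sum\gamma_j^{-\kappa}<\infty$; (C6) $\sum|\Delta_n|/\gamma_n^2<\infty$; (C7) $\sum|\Delta^2_n|/\gamma_n<\infty$. For $n\ge1$, $a_n=-\frac{\omega^2}{2\gamma_{2n-1}\gamma_{2n}}+\frac{\gamma_{2n-1}}{2\gamma_{2n}}+\frac{\gamma_{2n-2}}{2\gamma_{2n-1}}+i\left(\frac{\omega}{2\gamma_{2n-1}}+\frac{\omega\gamma_{2n-2}}{2\gamma_{2n-1}\gamma_{2n}}\right)$, $b_n=\frac{\omega^2}{2\gamma_{2n-1}\gamma_{2n}}-\frac{\gamma_{2n-1}}{2\gamma_{2n}}+\frac{\gamma_{2n-2}}{2\gamma_{2n-1}}+i\left(-\frac{\omega}{2\gamma_{2n-1}}+\frac{\omega\gamma_{2n-2}}{2\gamma_{2n-1}\gamma_{2n}}\right)$. *)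

theory Defs
  imports Complex_Main
begin

definition Delta :: "(nat \<Rightarrow> real) \<Rightarrow> nat \<Rightarrow> real" where
  "Delta \<gamma> n = \<gamma> (Suc n) - \<gamma> n"

definition Delta2 :: "(nat \<Rightarrow> real) \<Rightarrow> nat \<Rightarrow> real" where
  "Delta2 \<gamma> n = Delta \<gamma> (Suc n) - Delta \<gamma> n"

definition a_seq :: "(nat \<Rightarrow> real) \<Rightarrow> real \<Rightarrow> nat \<Rightarrow> complex" where
  "a_seq \<gamma> \<omega> n =
     Complex
       (- (\<omega>^2) / (2 * \<gamma> (2*n-1) * \<gamma> (2*n)) + \<gamma> (2*n-1) / (2 * \<gamma> (2*n))
          + \<gamma> (2*n-2) / (2 * \<gamma> (2*n-1)))
       (\<omega> / (2 * \<gamma> (2*n-1)) + \<omega> * \<gamma> (2*n-2) / (2 * \<gamma> (2*n-1) * \<gamma> (2*n)))"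

definition b_seq :: "(nat \<Rightarrow> real) \<Rightarrow> real \<Rightarrow> nat \<Rightarrow> complex" where
  "b_seq \<gamma> \<omega> n =
     Complex
       ((\<omega>^2) / (2 * \<gamma> (2*n-1) * \<gamma> (2*n)) - \<gamma> (2*n-1) / (2 * \<gamma> (2*n))
          + \<gamma> (2*n-2) / (2 * \<gamma> (2*n-1)))
       (- \<omega> / (2 * \<gamma> (2*n-1)) + \<omega> * \<gamma> (2*n-2) / (2 * \<gamma> (2*n-1) * \<gamma> (2*n)))"

end

theory Submission
  imports Defs
begin

lemma key_ineq:
  fixes x y z w :: real
  assumes x: "x > 0" and y: "y > 0" and z: "z > 0" and w: "w > 0"
    and d1: "\<bar>y - x\<bar> \<le> w/2" and d0: "\<bar>x - z\<bar> \<le> w/2" and big: "x > 3*w"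
  shows "(w^2 - x^2 + y*z)^2 + (w*(z-y))^2 < (w*(y+z))^2"
proof -
  define m where "m = min y z"
  have m0: "m \<ge> x - w/2" using d1 d0 unfolding m_def by (simp only: min_def abs_le_iff) (auto simp: field_simps)
  have m1: "m > 0" using y z unfolding m_def by auto
  have mm: "m*m \<le> y*z" unfolding m_def
    by (smt (verit) mult_mono y z mult_left_mono mult_right_mono)
  have "y*z - x^2 = x*((y-x) - (x-z)) - (y-x)*(x-z)" by (simp add: algebra_simps power2_eq_square)
  have e1: "\<bar>x*((y-x) - (x-z))\<bar> \<le> x*w"
  proof -
    have "\<bar>(y-x) - (x-z)\<bar> \<le> w" using d1 d0 by linarith
    thus ?thesis using x by (simp add: abs_mult mult_left_mono)
  qed
  have e2: "\<bar>(y-x)*(x-z)\<bar> \<le> (w/2)*(w/2)"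
    unfolding abs_mult by (rule mult_mono[OF d1 d0]) (use w in auto)
  have L: "\<bar>w^2 - x^2 + y*z\<bar> < 2*w*m"
  proof -
    have "\<bar>w^2 - x^2 + y*z\<bar> \<le> w^2 + x*w + w*w/4"
      using e1 e2 \<open>y*z - x^2 = _\<close> w by (simp add: power2_eq_square)
    also have "\<dots> < 2*w*(x - w/2)"
    proof -
      have "w*x > w*(3*w)" using big w by simp
      moreover have "w*w > 0" using w by simp
      ultimately show ?thesis by (simp add: power2_eq_square algebra_simps)
    qed
    also have "\<dots> \<le> 2*w*m" using m0 w by simp
    finally show ?thesis .
  qed
  have "(w^2 - x^2 + y*z)^2 < (2*w*m)^2"
    using L by (metis abs_ge_zero abs_power2 power_strict_mono pos2 power2_abs)
  also have "\<dots> = 4*w^2*(m*m)" by (simp add: power2_eq_square)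
  also have "\<dots> \<le> 4*w^2*(y*z)" using mm w by simp
  finally have "(w^2 - x^2 + y*z)^2 < 4*w^2*(y*z)" .
  moreover have "(w*(y+z))^2 - (w*(z-y))^2 = 4*w^2*(y*z)"
    by (simp add: power2_eq_square algebra_simps)
  ultimately show ?thesis by linarith
qed

lemma key2:
  fixes x y z w :: real
  assumes x: "x > 0" and y: "y > 0" and z: "z > 0" and w: "w > 0"
    and d1: "\<bar>y - x\<bar> \<le> w/2" and d0: "\<bar>x - z\<bar> \<le> w/2" and big: "x > 3*w"
  shows "w / (2*x) + w*z/(2*x*y) >
    cmod (Complex (w^2/(2*x*y) - x/(2*y) + z/(2*x)) (- w/(2*x) + w*z/(2*x*y)))"
proof -
  define D where "D = 2*x*y"
  have D: "D > 0" using x y by (simp add: D_def)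
  have e1: "w / (2*x) + w*z/(2*x*y) = (w*(y+z))/D"
    using x y by (simp add: D_def field_simps)
  have e2: "w^2/(2*x*y) - x/(2*y) + z/(2*x) = (w^2 - x^2 + y*z)/D"
    using x y by (simp add: D_def field_simps power2_eq_square)
  have e3: "- w/(2*x) + w*z/(2*x*y) = (w*(z-y))/D"
    using x y by (simp add: D_def field_simps)
  have "cmod (Complex ((w^2 - x^2 + y*z)/D) ((w*(z-y))/D))
      = sqrt ((w^2 - x^2 + y*z)^2 + (w*(z-y))^2) / D"
    using D by (simp add: cmod_def power_divide real_sqrt_divide add_divide_distrib[symmetric])
  also have "\<dots> < sqrt ((w*(y+z))^2) / D"
    using key_ineq[OF assms] D by (intro divide_strict_right_mono real_sqrt_less_mono) auto
  also have "\<dots> = (w*(y+z))/D" using w y z by simp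
  finally show ?thesis using e1 e2 e3 by simp
qed

theorem corollary9:
  fixes \<gamma> :: "nat \<Rightarrow> real" and \<omega> :: real
  assumes pos: "\<And>n. \<gamma> n > 0"
    and C1: "filterlim \<gamma> at_top sequentially"
    and C2: "Delta \<gamma> \<longlonglongrightarrow> 0"
    and C3: "\<exists>n0 m0. \<forall>n\<ge>n0. \<forall>m\<ge>m0. \<gamma> (n + m) > \<gamma> n"
    and C4: "\<not> summable (\<lambda>j. 1 / \<gamma> j)"
    and C5: "\<exists>\<kappa>>1. summable (\<lambda>j. \<gamma> j powr (- \<kappa>))"
    and C6: "summable (\<lambda>n. \<bar>Delta \<gamma> n\<bar> / \<gamma> n ^ 2)"
    and C7: "summable (\<lambda>n. \<bar>Delta2 \<gamma> n\<bar> / \<gamma> n)"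
    and om: "\<omega> > 0"
  shows "\<forall>\<^sub>F n in sequentially. Im (a_seq \<gamma> \<omega> n) > cmod (b_seq \<gamma> \<omega> n)"
proof -
  have "\<forall>\<^sub>F k in sequentially. dist (Delta \<gamma> k) 0 < \<omega>/2"
    using C2 om tendstoD half_gt_zero by blast
  hence "\<forall>\<^sub>F k in sequentially. \<bar>Delta \<gamma> k\<bar> < \<omega>/2" by (simp add: dist_real_def)
  then obtain N1 where N1: "\<And>k. k \<ge> N1 \<Longrightarrow> \<bar>Delta \<gamma> k\<bar> < \<omega>/2"
    by (auto simp: eventually_sequentially)
  have "\<forall>\<^sub>F k in sequentially. \<gamma> k > 3*\<omega>"
    using C1 by (simp add: filterlim_at_top_dense)
  then obtain N2 where N2: "\<And>k. k \<ge> N2 \<Longrightarrow> \<gamma> k > 3*\<omega>"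
    by (auto simp: eventually_sequentially)
  show ?thesis unfolding eventually_sequentially
  proof (intro exI allI impI)
    fix n assume n: "n \<ge> N1 + N2 + 1"
    have i1: "2*n-1 = Suc (2*n-2)" and i2: "2*n = Suc (2*n-1)" using n by auto
    have "\<bar>Delta \<gamma> (2*n-1)\<bar> < \<omega>/2" "\<bar>Delta \<gamma> (2*n-2)\<bar> < \<omega>/2"
      using N1 n by auto
    hence d1: "\<bar>\<gamma> (2*n) - \<gamma> (2*n-1)\<bar> \<le> \<omega>/2"
      and d0: "\<bar>\<gamma> (2*n-1) - \<gamma> (2*n-2)\<bar> \<le> \<omega>/2"
      unfolding Delta_def by (metis i2 less_imp_le, metis i1 less_imp_le)
    have big: "\<gamma> (2*n-1) > 3*\<omega>" using N2 n by auto
    have "\<gamma> (2*n-1) - \<gamma>(2*n-2) = -(\<gamma> (2*n-2) - \<gamma>(2*n-1))" by simp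
    hence d0': "\<bar>\<gamma> (2*n-1) - \<gamma> (2*n-2)\<bar> \<le> \<omega>/2" using d0 by simp
    show "Im (a_seq \<gamma> \<omega> n) > cmod (b_seq \<gamma> \<omega> n)"
      using key2[OF pos pos pos om d1 _ big, of "2*n-2"] d0
      unfolding a_seq_def b_seq_def by (simp add: mult.assoc)
  qed
qed

end
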